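(* Let $X$ be an $n$-dimensional projective space over an arbitrary field and $K$ a $k$-dimensional subspace of $X$ with $-1\le k\le\frac{n-1}{2}$. Then for every point $P$ of $K$ there is a hyperplane $H_P$ of $X$ containing $P$ such that the set $\mathcal B_{X/P}$ of all lines of $X$ through $P$ contained in $H_P$ (which is a $(1,0)$-blocking set in $X/P$, i.e. every plane of $X$ through $P$ contains a line of $\mathcal B_{X/P}$) satisfies: (1) every line of $K$ through $P$ belongs to $\mathcal B_{X/P}$; and (2) for every line $L$ of $K$, the set $\mathcal B_L:=\bigcup_{P\in L}\bigl(\mathcal B_{X/P}\setminus\{\text{lines of }K\text{ through }P\}\bigr)$ blocks $\mathcal S_L:=\{S: S\text{ a plane of }X,\ K\cap S=L\}$, i.e. every $S\in\mathcal S_L$ contains some line of $\mathcal B_L$.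
   Context: Projective dimension is used. For a point $P$ of $X$, the quotient $X/P$ is the projective space whose $r$-dimensional subspaces are the $(r+1)$-dimensional subspaces of $X$ through $P$; thus its points are the lines of $X$ through $P$ and its hyperplanes are the hyperplanes of $X$ through $P$. A $(1,0)$-blocking set in a projective space is a set of points meeting every line. *)

theory Defs
  imports "HOL-Analysis.Analysis"
begin

text \<open>The projective space X = PG(n,F), n = CARD('m) - 1, over an arbitrary field F = 'a,
  is modelled by the lattice of linear subspaces of the vector space 'a^'m.
  A projective subspace of projective dimension d is a linear subspace of vector
  dimension d+1 (the empty projective subspace is the zero subspace, dimension -1).
  Incidence is inclusion.\<close>

definition proj_dim :: "('a::field ^ 'm) set \<Rightarrow> int" where
  "proj_dim U = int (vec.dim U) - 1"

definition proj_subspace :: "('a::field ^ 'm) set \<Rightarrow> int \<Rightarrow> bool" where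
  "proj_subspace U d \<longleftrightarrow> vec.subspace U \<and> proj_dim U = d"

abbreviation is_point :: "('a::field ^ 'm) set \<Rightarrow> bool" where
  "is_point U \<equiv> proj_subspace U 0"

abbreviation is_line :: "('a::field ^ 'm) set \<Rightarrow> bool" where
  "is_line U \<equiv> proj_subspace U 1"

abbreviation is_plane :: "('a::field ^ 'm) set \<Rightarrow> bool" where
  "is_plane U \<equiv> proj_subspace U 2"

definition is_hyperplane :: "('a::field ^ 'm) set \<Rightarrow> bool" where
  "is_hyperplane U \<longleftrightarrow> proj_subspace U (int CARD('m) - 2)"

end

theory Submission imports Defs begin

lemma ker_subspace:
  fixes g :: "'a::field^'m \<Rightarrow> 'a"
  assumes add: "\<And>x y. g (x+y) = g x + g y" and sc: "\<And>c x. g (c *s x) = c * g x"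
  shows "vec.subspace {x. g x = 0}"
proof -
  have "g 0 = 0" using sc[of 0 0] by simp
  then show ?thesis unfolding vec.subspace_def using add sc by auto
qed

lemma ker_dim:
  fixes g :: "'a::field^'m \<Rightarrow> 'a"
  assumes add: "\<And>x y. g (x+y) = g x + g y" and sc: "\<And>c x. g (c *s x) = c * g x"
    and w: "g w \<noteq> 0"
  shows "vec.dim {x. g x = 0} = CARD('m) - 1"
proof -
  let ?Z = "{x. g x = 0}"
  have sub: "vec.subspace ?Z" by (rule ker_subspace[OF add sc])
  obtain Bk where Bk: "Bk \<subseteq> ?Z" "vec.independent Bk" "?Z \<subseteq> vec.span Bk" "card Bk = vec.dim ?Z"
    by (rule vec.basis_exists)
  have spB: "vec.span Bk = ?Z" using vec.span_subspace[OF Bk(1) Bk(3) sub] .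
  have wn: "w \<notin> vec.span Bk" using spB w by auto
  have ind: "vec.independent (insert w Bk)" using vec.independent_insertI[OF wn Bk(2)] .
  have diff: "g (x - y) = g x - g y" for x y
  proof -
    have "g (x + (-1) *s y) = g x + (-1) * g y" by (simp only: add sc)
    then show ?thesis by simp
  qed
  have "x \<in> vec.span (insert w Bk)" for x
  proof -
    have "g (x - (g x / g w) *s w) = g x - (g x / g w) * g w" by (simp only: diff sc)
    then have "g (x - (g x / g w) *s w) = 0" using w by simp
    then show ?thesis unfolding vec.span_breakdown_eq using spB by blast
  qed
  then have "vec.span (insert w Bk) = vec.span UNIV" by auto
  then have "vec.dim (UNIV :: ('a^'m) set) = card (insert w Bk)"
    using vec.dim_eq_card ind by blast
  moreover have "finite Bk" using vec.finiteI_independent Bk(2) by blast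
  moreover have "w \<notin> Bk" using wn vec.span_base by blast
  ultimately have "CARD('m) = Suc (card Bk)" by (simp add: card_cart_basis)
  then show ?thesis using Bk(4) by simp
qed

lemma comb:
  fixes g :: "'a::field^'m \<Rightarrow> 'a"
  assumes add: "\<And>x y. g (x+y) = g x + g y" and sc: "\<And>c x. g (c *s x) = c * g x"
    and x: "x \<notin> vec.span A" and y: "y \<notin> vec.span (insert x A)"
  shows "\<exists>c. c \<in> vec.span {x,y} \<and> c \<notin> vec.span A \<and> g c = 0"
proof (cases "g y = 0")
  case True
  have "y \<notin> vec.span A" using y vec.span_mono[of A "insert x A"] by blast
  then show ?thesis using True by (intro exI[of _ y]) (simp add: vec.span_base)
next
  case False
  define c where "c = x + (- (g x / g y)) *s y"
  have "g c = g x + (- (g x / g y)) * g y" unfolding c_def by (simp only: add sc)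
  then have gc: "g c = 0" using False by simp
  have cs: "c \<in> vec.span {x,y}" unfolding c_def
    by (intro vec.span_add vec.span_scale) (auto intro: vec.span_base)
  have "c \<notin> vec.span A"
  proof
    assume cA: "c \<in> vec.span A"
    show False
    proof (cases "g x = 0")
      case True then show False using cA x unfolding c_def by simp
    next
      case gx: False
      have "y = (- (g y / g x)) *s (c - x)" unfolding c_def using gx False by (simp add: vec.scale_right_distrib)
      moreover have "c - x \<in> vec.span (insert x A)"
        using cA vec.span_mono[of A "insert x A"]
        by (intro vec.span_diff) (auto intro: vec.span_base)
      ultimately have "y \<in> vec.span (insert x A)" by (metis vec.span_scale)
      then show False using y by simp
    qed
  qed
  then show ?thesis using gc cs by blast
qed

lemma point_span:
  fixes p :: "'a::field^'m"
  assumes "p \<noteq> 0" shows "is_point (vec.span {p})"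
proof -
  have "vec.independent {p}" using assms by (simp add: vec.independent_insert)
  then have "vec.dim (vec.span {p}) = 1" using vec.dim_span_eq_card_independent by fastforce
  then show ?thesis unfolding proj_subspace_def proj_dim_def by (simp add: vec.subspace_span)
qed

lemma line_span:
  fixes p :: "'a::field^'m"
  assumes "p \<noteq> 0" "c \<notin> vec.span {p}" shows "is_line (vec.span {p, c})"
proof -
  have "vec.independent {p}" using assms by (simp add: vec.independent_insert)
  then have "vec.independent (insert c {p})" using assms(2) vec.independent_insertI by blast
  moreover have "c \<noteq> p" using assms(2) vec.span_base by blast
  ultimately have "vec.dim (vec.span {p, c}) = 2" using vec.dim_span_eq_card_independent
    by (metis card_2_iff insert_commute)
  then show ?thesis unfolding proj_subspace_def proj_dim_def by (simp add: vec.subspace_span)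
qed

lemma basis_of:
  fixes U :: "('a::field^'m) set"
  assumes "vec.subspace U"
  obtains B where "vec.independent B" "U = vec.span B" "card B = vec.dim U" "B \<subseteq> U"
proof -
  obtain B where B: "B \<subseteq> U" "vec.independent B" "U \<subseteq> vec.span B" "card B = vec.dim U"
    by (rule vec.basis_exists)
  then show ?thesis using that vec.span_subspace[OF B(1) B(3) assms] by auto
qed

lemma point_ex:
  fixes P :: "('a::field^'m) set"
  assumes "is_point P" shows "\<exists>p. p \<noteq> 0 \<and> P = vec.span {p}"
proof -
  have sub: "vec.subspace P" and d: "vec.dim P = 1" using assms unfolding proj_subspace_def proj_dim_def by auto
  obtain B where B: "vec.independent B" "P = vec.span B" "card B = vec.dim P" by (rule basis_of[OF sub])
  then obtain p where "B = {p}" using d card_1_singletonE by metis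
  moreover have "p \<noteq> 0" using B(1) \<open>B = {p}\<close> vec.dependent_zero by blast
  ultimately show ?thesis using B by blast
qed

lemma line_ex:
  fixes L :: "('a::field^'m) set"
  assumes "is_line L" shows "\<exists>a b. a \<noteq> 0 \<and> b \<notin> vec.span {a} \<and> L = vec.span {a, b}"
proof -
  have sub: "vec.subspace L" and d: "vec.dim L = 2" using assms unfolding proj_subspace_def proj_dim_def by auto
  obtain B where B: "vec.independent B" "L = vec.span B" "card B = vec.dim L" by (rule basis_of[OF sub])
  then obtain a b where ab: "B = {b, a}" "a \<noteq> b" using d card_2_iff by metis
  have "a \<noteq> 0" using B(1) ab vec.dependent_zero by blast
  moreover have "b \<notin> vec.span {a}" using B(1) ab by (simp add: vec.independent_insert)
  ultimately show ?thesis using B ab by (metis insert_commute)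
qed

lemma dim_small:
  fixes U :: "('a::field^'m) set"
  assumes "U \<subseteq> vec.span {p, q}" shows "vec.dim U \<le> 2"
proof -
  have "vec.dim U \<le> card {p, q}" using vec.dim_le_card[OF assms] by simp
  also have "\<dots> \<le> 2" by (simp add: card_insert_le_m1)
  finally show ?thesis .
qed

lemma plane_ex:
  fixes S :: "('a::field^'m) set"
  assumes "is_plane S" "p \<in> S"
  shows "\<exists>u1 u2. u1 \<in> S \<and> u2 \<in> S \<and> u1 \<notin> vec.span {p} \<and> u2 \<notin> vec.span (insert u1 {p})"
proof -
  have d: "vec.dim S = 3" using assms unfolding proj_subspace_def proj_dim_def by auto
  have "\<not> S \<subseteq> vec.span {p, p}" using dim_small[of S p p] d by auto
  then obtain u1 where u1: "u1 \<in> S" "u1 \<notin> vec.span {p}" by auto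
  have "\<not> S \<subseteq> vec.span {u1, p}" using dim_small[of S u1 p] d by auto
  then obtain u2 where u2: "u2 \<in> S" "u2 \<notin> vec.span (insert u1 {p})" by auto
  show ?thesis using u1 u2 by blast
qed

theorem corollary3p28:
  fixes K :: "('a::field ^ 'm) set" and k n :: int
  assumes "n = int CARD('m) - 1"
    and "proj_subspace K k"
    and "-1 \<le> k" and "2 * k \<le> n - 1"
  shows "\<exists>H :: ('a ^ 'm) set \<Rightarrow> ('a ^ 'm) set.
    (\<forall>P. is_point P \<and> P \<subseteq> K \<longrightarrow>
        is_hyperplane (H P) \<and> P \<subseteq> H P
      \<comment> \<open>B_{X/P} = lines through P in H P is a (1,0)-blocking set of X/P\<close>
      \<and> (\<forall>S. is_plane S \<and> P \<subseteq> S \<longrightarrow>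
             (\<exists>l. is_line l \<and> P \<subseteq> l \<and> l \<subseteq> H P \<and> l \<subseteq> S))
      \<comment> \<open>(1)\<close>
      \<and> (\<forall>l. is_line l \<and> P \<subseteq> l \<and> l \<subseteq> K \<longrightarrow> l \<subseteq> H P))
    \<comment> \<open>(2)\<close>
    \<and> (\<forall>L. is_line L \<and> L \<subseteq> K \<longrightarrow>
         (\<forall>S. is_plane S \<and> K \<inter> S = L \<longrightarrow>
            (\<exists>P l. is_point P \<and> P \<subseteq> L \<and> is_line l \<and> P \<subseteq> l \<and> l \<subseteq> H P
                   \<and> \<not> l \<subseteq> K \<and> l \<subseteq> S)))"
proof -
  have subK: "vec.subspace K" and dK: "int (vec.dim K) - 1 = k"
    using assms(2) unfolding proj_subspace_def proj_dim_def by auto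
  obtain BK where BK: "vec.independent BK" "K = vec.span BK" "card BK = vec.dim K"
    by (rule basis_of[OF subK])
  obtain B where B: "BK \<subseteq> B" "vec.independent B" "UNIV \<subseteq> vec.span B"
    using vec.maximal_independent_subset_extend[of BK UNIV] BK(1) by auto
  have spB: "x \<in> vec.span B" for x using B(3) by auto
  have finB: "finite B" using B(2) vec.finiteI_independent by blast
  have "vec.span B = vec.span (UNIV :: ('a^'m) set)" using B(3) by auto
  then have "vec.dim (UNIV :: ('a^'m) set) = card B" by (rule vec.dim_eq_card[OF _ B(2)])
  then have cB: "card B = CARD('m)" by (simp add: card_cart_basis)
  have "card (B - BK) = card B - card BK" using B(1) finB by (meson card_Diff_subset finite_subset)
  moreover have "2 * card BK \<le> CARD('m)" using BK(3) dK assms(1,4) by linarith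
  ultimately have "card BK \<le> card (B - BK)" using cB by linarith
  then obtain \<sigma> where sig: "\<sigma> ` BK \<subseteq> B - BK" "inj_on \<sigma> BK"
    using card_le_inj[of BK "B - BK"] finB B(1) by (meson finite_Diff finite_subset)
  define R where "R = vec.representation B"
  define F where "F p x = (\<Sum>b\<in>BK. R p b * R x (\<sigma> b))" for p x
  have Radd: "R (x + y) b = R x b + R y b" for x y b
    unfolding R_def using vec.representation_add[OF B(2) spB spB] by simp
  have Rsc: "R (c *s x) b = c * R x b" for c x b
    unfolding R_def using vec.representation_scale[OF B(2) spB] by simp
  have F1add: "F (p + q) x = F p x + F q x" for p q x
    unfolding F_def Radd by (simp add: sum.distrib algebra_simps)
  have F1sc: "F (c *s p) x = c * F p x" for c p x
    unfolding F_def Rsc by (simp add: sum_distrib_left algebra_simps)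
  have F2add: "F p (x + y) = F p x + F p y" for p x y
    unfolding F_def Radd by (simp add: sum.distrib algebra_simps)
  have F2sc: "F p (c *s x) = c * F p x" for c p x
    unfolding F_def Rsc by (simp add: sum_distrib_left algebra_simps)
  have RK: "R x = vec.representation BK x" if "x \<in> K" for x
    unfolding R_def using vec.representation_extend[OF B(2) _ B(1)] that BK(2) by simp
  have FK: "F p x = 0" if "x \<in> K" for p x
  proof -
    have "R x (\<sigma> b) = 0" if "b \<in> BK" for b
    proof -
      have "\<sigma> b \<notin> BK" using sig that by auto
      then show ?thesis using RK[OF \<open>x \<in> K\<close>] vec.representation_ne_zero by metis
    qed
    then show ?thesis unfolding F_def by simp
  qed
  have Fnz: "\<exists>w. F p w \<noteq> 0" if "p \<in> K" "p \<noteq> 0" for p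
  proof -
    have "\<exists>b0\<in>BK. R p b0 \<noteq> 0"
    proof (rule ccontr)
      assume "\<not> ?thesis"
      then have "R p b = 0" for b
        using RK[OF \<open>p \<in> K\<close>] vec.representation_ne_zero by metis
      then have "{b. R p b \<noteq> 0} = {}" by simp
      moreover have "(\<Sum>b | R p b \<noteq> 0. R p b *s b) = p"
        unfolding R_def by (rule vec.sum_nonzero_representation_eq[OF B(2) spB])
      ultimately show False using that by simp
    qed
    then obtain b0 where b0: "b0 \<in> BK" "R p b0 \<noteq> 0" by blast
    have sb0: "\<sigma> b0 \<in> B" using sig b0 by auto
    have "R (\<sigma> b0) (\<sigma> b) = (if b = b0 then 1 else 0)" if "b \<in> BK" for b
      unfolding R_def vec.representation_basis[OF B(2) sb0]
      using sig(2) that b0(1) by (auto dest: inj_onD)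
    then have "F p (\<sigma> b0) = (\<Sum>b\<in>BK. if b = b0 then R p b else 0)"
      unfolding F_def by (intro sum.cong) auto
    also have "\<dots> = R p b0" using b0(1) finB B(1) by (simp add: finite_subset)
    finally show ?thesis using b0 by metis
  qed
  define H where "H P = {x. \<forall>q\<in>P. F q x = 0}" for P
  have Hsp: "H (vec.span {p}) = {x. F p x = 0}" for p
  proof -
    have "F q x = 0" if "q \<in> vec.span {p}" "F p x = 0" for q x
      using that unfolding vec.span_singleton by (auto simp: F1sc)
    then show ?thesis unfolding H_def by (auto intro: vec.span_base)
  qed
  have Hsub: "vec.subspace {x. F p x = 0}" for p by (rule ker_subspace) (auto simp: F2add F2sc)
  have c0: "CARD('m) \<ge> 1" by (simp add: Suc_leI)
  have partP: "is_hyperplane (H P) \<and> P \<subseteq> H P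
      \<and> (\<forall>S. is_plane S \<and> P \<subseteq> S \<longrightarrow>
             (\<exists>l. is_line l \<and> P \<subseteq> l \<and> l \<subseteq> H P \<and> l \<subseteq> S))
      \<and> (\<forall>l. is_line l \<and> P \<subseteq> l \<and> l \<subseteq> K \<longrightarrow> l \<subseteq> H P)"
    if P: "is_point P \<and> P \<subseteq> K" for P
  proof (intro conjI)
    obtain p where p: "p \<noteq> 0" "P = vec.span {p}" using point_ex P by blast
    have pK: "p \<in> K" using P p(2) vec.span_base by blast
    have HP: "H P = {x. F p x = 0}" using Hsp p(2) by simp
    obtain w where w: "F p w \<noteq> 0" using Fnz[OF pK p(1)] by blast
    have "vec.dim (H P) = CARD('m) - 1" unfolding HP
      by (rule ker_dim[of "F p", OF F2add F2sc w])
    then show "is_hyperplane (H P)" unfolding is_hyperplane_def proj_subspace_def proj_dim_def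
      using Hsub HP c0 by simp
    show PH: "P \<subseteq> H P" unfolding HP using P FK by auto
    show "\<forall>l. is_line l \<and> P \<subseteq> l \<and> l \<subseteq> K \<longrightarrow> l \<subseteq> H P" unfolding HP using FK by auto
    show "\<forall>S. is_plane S \<and> P \<subseteq> S \<longrightarrow> (\<exists>l. is_line l \<and> P \<subseteq> l \<and> l \<subseteq> H P \<and> l \<subseteq> S)"
    proof (intro allI impI)
      fix S :: "('a^'m) set" assume S: "is_plane S \<and> P \<subseteq> S"
      have subS: "vec.subspace S" using S unfolding proj_subspace_def by simp
      have "p \<in> P" unfolding p(2) by (rule vec.span_base) simp
      then have pS: "p \<in> S" using S by blast
      have "\<exists>u1 u2. u1 \<in> S \<and> u2 \<in> S \<and> u1 \<notin> vec.span {p} \<and> u2 \<notin> vec.span (insert u1 {p})"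
        using plane_ex[of S p] S pS by simp
      then obtain u1 u2 where u: "u1 \<in> S" "u2 \<in> S" "u1 \<notin> vec.span {p}" "u2 \<notin> vec.span (insert u1 {p})"
        by blast
      have "\<exists>c. c \<in> vec.span {u1, u2} \<and> c \<notin> vec.span {p} \<and> F p c = 0"
        by (rule comb[of "F p", OF F2add F2sc u(3,4)])
      then obtain c where c: "c \<in> vec.span {u1, u2}" "c \<notin> vec.span {p}" "F p c = 0"
        by blast
      have "vec.span {u1, u2} \<subseteq> S" by (rule vec.span_minimal[OF _ subS]) (simp add: u(1,2))
      then have cS: "c \<in> S" using c(1) by blast
      show "\<exists>l. is_line l \<and> P \<subseteq> l \<and> l \<subseteq> H P \<and> l \<subseteq> S"
      proof (intro exI[of _ "vec.span {p, c}"] conjI)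
        show "is_line (vec.span {p, c})" by (rule line_span[OF p(1) c(2)])
        show "P \<subseteq> vec.span {p, c}" unfolding p(2) by (rule vec.span_mono) auto
        show "vec.span {p, c} \<subseteq> H P" unfolding HP
          by (rule vec.span_minimal[OF _ Hsub[of p]]) (simp add: c(3) FK[OF pK])
        show "vec.span {p, c} \<subseteq> S" by (rule vec.span_minimal[OF _ subS]) (simp add: cS pS)
      qed
    qed
  qed
  have partL: "\<exists>P l. is_point P \<and> P \<subseteq> L \<and> is_line l \<and> P \<subseteq> l \<and> l \<subseteq> H P \<and> \<not> l \<subseteq> K \<and> l \<subseteq> S"
    if L: "is_line L \<and> L \<subseteq> K" and S: "is_plane S \<and> K \<inter> S = L" for L S
  proof -
    have subS: "vec.subspace S" and dS: "vec.dim S = 3" using S unfolding proj_subspace_def proj_dim_def by auto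
    have dL: "vec.dim L = 2" using L unfolding proj_subspace_def proj_dim_def by auto
    have LS: "L \<subseteq> S" using S by auto
    have "\<not> S \<subseteq> L" using vec.dim_subset[of S L] dS dL by auto
    then obtain v where v: "v \<in> S" "v \<notin> L" by auto
    have vK: "v \<notin> K" using v S by auto
    obtain a b where ab: "a \<noteq> 0" "b \<notin> vec.span {a}" "L = vec.span {a, b}" using line_ex L by blast
    have a0: "a \<notin> vec.span {}" using ab by simp
    obtain c where c: "c \<in> vec.span {a, b}" "c \<notin> vec.span {}" "F c v = 0"
      using comb[of "\<lambda>q. F q v", OF F1add F1sc a0] ab(2) by auto
    have cL: "c \<in> L" using c ab by simp
    have c0: "c \<noteq> 0" using c by simp
    have cK: "c \<in> K" using cL L by auto
    have scL: "vec.span {c} \<subseteq> L"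
      using vec.span_minimal[of "{c}" L] cL L unfolding proj_subspace_def by auto
    have vc: "v \<notin> vec.span {c}" using scL v by auto
    have g1: "is_point (vec.span {c})" by (rule point_span[OF c0])
    have g3: "is_line (vec.span {c, v})" by (rule line_span[OF c0 vc])
    have g4: "vec.span {c} \<subseteq> vec.span {c, v}" by (rule vec.span_mono) auto
    have g5: "vec.span {c, v} \<subseteq> H (vec.span {c})" unfolding Hsp
      by (rule vec.span_minimal[OF _ Hsub[of c]]) (simp add: c(3) FK[OF cK])
    have g6: "\<not> vec.span {c, v} \<subseteq> K" using vK vec.span_base[of v "{c, v}"] by auto
    have g7: "vec.span {c, v} \<subseteq> S" by (rule vec.span_minimal[OF _ subS]) (use cL LS v(1) in auto)
    show ?thesis
      apply (rule exI[of _ "vec.span {c}"], rule exI[of _ "vec.span {c, v}"])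
      using g1 scL g3 g4 g5 g6 g7 by (intro conjI)
  qed
  show ?thesis
    apply (rule exI[of _ H])
    apply (rule conjI)
     apply (intro allI impI)
     apply (erule partP)
    apply (intro allI impI)
    apply (erule (1) partL)
    done
qed

end
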